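(* For every integer $k\ge0$, the following identity of rational functions in $x$ and $q$ holds: \[ \tilde\sigma_{-k-1}=(1-x^{-1})\sum_{j=-k}^{k}\frac{R_{k,j}}{x+x^{-1}-q^j-q^{-j}},\qquad R_{k,j}=-\frac{(-1)^{k+j}q^{\binom{j+1}{2}+\binom{k+1}{2}}}{(q;q)_{k-j}(q;q)_{k+j}}, \] where $\tilde\sigma_{-k-1}=\frac{(-1)^kq^{\binom{k+1}{2}}}{(x;q)_{k+1}(qx^{-1};q)_k}$ and $\binom{j+1}{2}=\frac{j(j+1)}{2}$ for all $j\in\mathbb{Z}$.
   Context: $(a;q)_n=\prod_{j=0}^{n-1}(1-aq^j)$. The quantity $R_{k,j}$ is the residue of $\tilde\sigma_{-k-1}(x)\,dx$ at $x=q^j$. *)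

theory Defs
  imports Complex_Main
begin

definition qpoch :: "complex \<Rightarrow> complex \<Rightarrow> nat \<Rightarrow> complex" where
  "qpoch a q n = (\<Prod>j<n. 1 - a * q ^ j)"

definition tri :: "int \<Rightarrow> int" where
  "tri j = j * (j + 1) div 2"

definition sigma_tilde :: "nat \<Rightarrow> complex \<Rightarrow> complex \<Rightarrow> complex" where
  "sigma_tilde k x q =
     (-1) ^ k * q powi tri (int k) / (qpoch x q (k + 1) * qpoch (q / x) q k)"

definition Rkj :: "nat \<Rightarrow> int \<Rightarrow> complex \<Rightarrow> complex" where
  "Rkj k j q =
     - ((-1) powi (int k + j) * q powi (tri j + tri (int k))
        / (qpoch q q (nat (int k - j)) * qpoch q q (nat (int k + j))))"

end

theory Submission
  imports Defs
begin

fun T :: "nat \<Rightarrow> nat" where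
  "T 0 = 0" | "T (Suc n) = T n + Suc n"

lemma T_twice: "2 * T n = n * (n + 1)"
  by (induction n) auto

lemma T_add: "T (j + d) = T j + T d + j * d"
  by (induction d) auto

lemma T_ge: "n \<le> T n"
  by (induction n) auto

lemma tri_nat: "tri (int n) = int (T n)"
proof -
  have "int n * (int n + 1) = 2 * int (T n)"
    using T_twice[of n] by (metis of_nat_1 of_nat_add of_nat_mult of_nat_numeral)
  then show ?thesis unfolding tri_def by simp
qed

lemma tri_neg: "tri (- int n) = int (T n) - int n"
proof -
  have "(- int n) * (- int n + 1) = 2 * (int (T n) - int n)"
  proof -
    have "int n * (int n + 1) = 2 * int (T n)"
      using T_twice[of n] by (metis of_nat_1 of_nat_add of_nat_mult of_nat_numeral)
    then show ?thesis by (simp add: algebra_simps)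
  qed
  then show ?thesis unfolding tri_def by simp
qed

definition bq :: "complex \<Rightarrow> nat \<Rightarrow> complex" where
  "bq q l = q ^ l + inverse (q ^ l)"

lemma qpoch_Suc: "qpoch a q (Suc n) = qpoch a q n * (1 - a * q ^ n)"
  unfolding qpoch_def by simp

lemma qpoch_qq: "qpoch q q n = (\<Prod>i<n. 1 - q ^ Suc i)"
  unfolding qpoch_def by simp

lemma prod_split_nat: "(\<Prod>i<a + b. f i) = (\<Prod>i<a. f i) * (\<Prod>i<b. f (a + i))"
  for f :: "nat \<Rightarrow> 'a::comm_monoid_mult"
  by (induction b) (auto simp: mult.assoc)

lemma key: "q \<noteq> 0 \<Longrightarrow> q ^ (m + j) * (bq q j - bq q m) = (q ^ m - q ^ j) * (1 - q ^ (m + j))"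
  unfolding bq_def by (simp add: power_add field_simps)

lemma pf_step:
  fixes x b c p :: "'a::field"
  assumes "x \<noteq> b" "x \<noteq> c" "c \<noteq> b" "p \<noteq> 0"
  shows "1/((x - b) * ((x - c) * p)) = 1/((x - c) * ((c - b) * p)) + (1/(x - b)) * (1/((b - c) * p))"
proof -
  have "x - b \<noteq> 0" "x - c \<noteq> 0" "c - b \<noteq> 0" "b - c \<noteq> 0" using assms by auto
  then show ?thesis using assms(4) by (simp add: divide_simps) (simp add: algebra_simps)
qed

lemma pf:
  fixes a :: "'i \<Rightarrow> 'a::field"
  assumes "finite S" "S \<noteq> {}" "inj_on a S" "x \<notin> a ` S"
  shows "1 / (\<Prod>i\<in>S. x - a i) = (\<Sum>i\<in>S. 1 / ((x - a i) * (\<Prod>l\<in>S-{i}. a i - a l)))"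
  using assms
proof (induction S arbitrary: x rule: finite_ne_induct)
  case (singleton b)
  show ?case by simp
next
  case (insert b F)
  note insert.hyps(1,3) [simp]
  have inj: "inj_on a F" and ab: "a b \<notin> a ` F"
    using insert.prems(1) \<open>b \<notin> F\<close> by auto
  have xb: "x \<noteq> a b" and xF: "x \<notin> a ` F" using insert.prems(2) by auto
  have IHx: "1/(\<Prod>i\<in>F. x - a i) = (\<Sum>i\<in>F. 1/((x - a i) * (\<Prod>l\<in>F-{i}. a i - a l)))"
    using insert.IH inj xF by blast
  have IHb: "1/(\<Prod>i\<in>F. a b - a i) = (\<Sum>i\<in>F. 1/((a b - a i) * (\<Prod>l\<in>F-{i}. a i - a l)))"
    using insert.IH[of "a b"] inj ab by blast
  have Pnz: "(\<Prod>l\<in>F-{i}. a i - a l) \<noteq> 0" if "i \<in> F" for i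
    using inj that insert.hyps(1) by (auto simp: inj_on_def)
  have abi: "a i \<noteq> a b" if "i \<in> F" for i using ab that by (metis image_eqI)
  have xi: "x \<noteq> a i" if "i \<in> F" for i using xF that by auto
  have prodins: "(\<Prod>l\<in>insert b F - {i}. a i - a l) = (a i - a b) * (\<Prod>l\<in>F-{i}. a i - a l)"
    if "i \<in> F" for i
  proof -
    have "insert b F - {i} = insert b (F - {i})" using that \<open>b \<notin> F\<close> by (metis insert_Diff_if singletonD)
    then show ?thesis using insert.hyps by simp
  qed
  have bF: "insert b F - {b} = F" using \<open>b \<notin> F\<close> by auto
  have "1 / (\<Prod>i\<in>insert b F. x - a i) = (1/(x - a b)) * (1/(\<Prod>i\<in>F. x - a i))"
    using insert.hyps by simp
  also have "\<dots> = (\<Sum>i\<in>F. 1/((x - a b) * ((x - a i) * (\<Prod>l\<in>F-{i}. a i - a l))))"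
    unfolding IHx sum_distrib_left by simp
  also have "\<dots> = (\<Sum>i\<in>F. 1/((x - a i) * ((a i - a b) * (\<Prod>l\<in>F-{i}. a i - a l)))
      + (1/(x - a b)) * (1/((a b - a i) * (\<Prod>l\<in>F-{i}. a i - a l))))"
  proof (rule sum.cong[OF refl])
    fix i assume i: "i \<in> F"
    have p: "(\<Prod>l\<in>F-{i}. a i - a l) \<noteq> 0" using Pnz[OF i] .
    have "a i - a b \<noteq> 0" "a b - a i \<noteq> 0" "x - a i \<noteq> 0" "x - a b \<noteq> 0"
      using abi[OF i] xi[OF i] xb by auto
    then show "1/((x - a b) * ((x - a i) * (\<Prod>l\<in>F-{i}. a i - a l))) =
      1/((x - a i) * ((a i - a b) * (\<Prod>l\<in>F-{i}. a i - a l)))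
      + (1/(x - a b)) * (1/((a b - a i) * (\<Prod>l\<in>F-{i}. a i - a l)))"
      using p by (intro pf_step) auto
  qed
  also have "\<dots> = (\<Sum>i\<in>F. 1/((x - a i) * (\<Prod>l\<in>insert b F-{i}. a i - a l)))
      + (1/(x - a b)) * (1/(\<Prod>i\<in>F. a b - a i))"
    unfolding sum.distrib IHb sum_distrib_left using prodins by simp
  also have "\<dots> = (\<Sum>i\<in>insert b F. 1/((x - a i) * (\<Prod>l\<in>insert b F-{i}. a i - a l)))"
    using insert.hyps bF by (simp add: add.commute)
  finally show ?case .
qed

lemma factor_low:
  assumes q: "q \<noteq> 0" and l: "l < j"
  shows "q ^ j * (bq q j - bq q l) = (1 - q ^ (j - l)) * (1 - q ^ (j + l))"
proof -
  obtain e where j: "j = l + e" using l le_Suc_ex less_imp_le_nat by blast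
  show ?thesis unfolding j bq_def using q
    by (simp add: power_add field_simps)
qed

lemma factor_high:
  assumes q: "q \<noteq> 0" and l: "j < m"
  shows "q ^ m * (bq q j - bq q m) = - ((1 - q ^ (m - j)) * (1 - q ^ (m + j)))"
proof -
  obtain e where m: "m = j + e" using l le_Suc_ex less_imp_le_nat by blast
  show ?thesis unfolding m bq_def using q
    by (simp add: power_add field_simps)
qed

lemma L_formula:
  assumes q: "q \<noteq> 0"
  shows "q ^ (j * j) * (\<Prod>l<j. bq q j - bq q l) = qpoch q q j * (\<Prod>l<j. 1 - q ^ (j + l))"
proof -
  have "q ^ (j * j) * (\<Prod>l<j. bq q j - bq q l) = (\<Prod>l<j. q ^ j * (bq q j - bq q l))"
    by (simp add: prod.distrib power_mult)
  also have "\<dots> = (\<Prod>l<j. (1 - q ^ (j - l)) * (1 - q ^ (j + l)))"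
    by (rule prod.cong) (auto simp: factor_low[OF q])
  also have "\<dots> = (\<Prod>l<j. 1 - q ^ (j - l)) * (\<Prod>l<j. 1 - q ^ (j + l))"
    by (simp add: prod.distrib)
  also have "(\<Prod>l<j. 1 - q ^ (j - l)) = qpoch q q j"
  proof -
    have "(\<Prod>l<j. 1 - q ^ (j - l)) = (\<Prod>i<j. 1 - q ^ Suc (j - Suc i))"
      by (rule prod.cong) (auto simp: Suc_diff_Suc)
    also have "\<dots> = (\<Prod>i<j. 1 - q ^ Suc i)"
      using prod.nat_diff_reindex[of "\<lambda>i. 1 - q ^ Suc i" j] by simp
    finally show ?thesis by (simp add: qpoch_qq)
  qed
  finally show ?thesis .
qed

lemma U_formula:
  assumes q: "q \<noteq> 0"
  shows "q ^ (d * j + T d) * (\<Prod>m\<in>{Suc j..j + d}. bq q j - bq q m)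
     = (-1) ^ d * qpoch q q d * (\<Prod>i<d. 1 - q ^ (2 * j + i + 1))"
proof (induction d)
  case 0
  then show ?case by (simp add: qpoch_def)
next
  case (Suc d)
  have set: "{Suc j..j + Suc d} = insert (Suc (j + d)) {Suc j..j + d}" by auto
  have fh: "q ^ Suc (j + d) * (bq q j - bq q (Suc (j + d))) = - ((1 - q ^ Suc d) * (1 - q ^ (2 * j + d + 1)))"
  proof -
    have e1: "Suc (j + d) - j = Suc d" by simp
    have e2: "Suc (j + d) + j = 2 * j + d + 1" by simp
    show ?thesis using factor_high[OF q, of j "Suc (j + d)", unfolded e1 e2] by simp
  qed
  have "q ^ (Suc d * j + T (Suc d)) * (\<Prod>m\<in>{Suc j..j + Suc d}. bq q j - bq q m)
      = (q ^ (d * j + T d) * (\<Prod>m\<in>{Suc j..j + d}. bq q j - bq q m))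
        * (q ^ Suc (j + d) * (bq q j - bq q (Suc (j + d))))"
    unfolding set by (simp add: power_add algebra_simps)
  also have "\<dots> = (-1) ^ d * qpoch q q d * (\<Prod>i<d. 1 - q ^ (2 * j + i + 1))
        * (- ((1 - q ^ Suc d) * (1 - q ^ (2 * j + d + 1))))"
    unfolding Suc.IH fh ..
  also have "\<dots> = (-1) ^ Suc d * qpoch q q (Suc d) * (\<Prod>i<Suc d. 1 - q ^ (2 * j + i + 1))"
    by (simp add: qpoch_Suc algebra_simps)
  finally show ?case .
qed

lemma combine:
  assumes "1 \<le> j"
  shows "(1 + q ^ j) * qpoch q q j * (\<Prod>l<j. 1 - q ^ (j + l)) * (\<Prod>i<d. 1 - q ^ (2 * j + i + 1))
     = qpoch q q (2 * j + d)"
proof -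
  obtain j' where j: "j = Suc j'" using assms by (cases j) auto
  have A: "qpoch q q (2 * j + d) = qpoch q q j * (\<Prod>i<j + d. 1 - q ^ Suc (j + i))"
    unfolding qpoch_qq using prod_split_nat[of "\<lambda>i. 1 - q ^ Suc i" j "j + d"]
    by (simp add: mult_2 add.assoc)
  have B: "(\<Prod>i<j + d. 1 - q ^ Suc (j + i)) = (\<Prod>i<j. 1 - q ^ Suc (j + i)) * (\<Prod>i<d. 1 - q ^ (2 * j + i + 1))"
  proof -
    have "(\<Prod>i<d. 1 - q ^ Suc (j + (j + i))) = (\<Prod>i<d. 1 - q ^ (2 * j + i + 1))"
      by (rule prod.cong) (auto simp: mult_2 add.assoc)
    then show ?thesis using prod_split_nat[of "\<lambda>i. 1 - q ^ Suc (j + i)" j d] by simp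
  qed
  have C: "(1 + q ^ j) * (\<Prod>l<j. 1 - q ^ (j + l)) = (\<Prod>i<j. 1 - q ^ Suc (j + i))"
  proof -
    have h1: "(\<Prod>l<j. 1 - q ^ (j + l)) = (1 - q ^ j) * (\<Prod>i<j'. 1 - q ^ Suc (j + i))"
      unfolding j prod.lessThan_Suc_shift by simp
    have h2: "(\<Prod>i<j. 1 - q ^ Suc (j + i)) = (\<Prod>i<j'. 1 - q ^ Suc (j + i)) * (1 - q ^ (j + j))"
      unfolding j by (simp add: prod.lessThan_Suc)
    have g: "(1 + q^j) * ((1-q^j) * B) = B * (1 - q^(j+j))" for B :: complex
      by (simp add: algebra_simps power_add)
    show ?thesis unfolding h1 h2 by (rule g)
  qed
  show ?thesis unfolding A B C[symmetric] by (simp add: algebra_simps)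
qed

lemma D_split:
  assumes "j \<le> k"
  shows "(\<Prod>l\<in>{0..k}-{j}. f l) = (\<Prod>l<j. f l) * (\<Prod>l\<in>{Suc j..k}. f l)"
proof -
  have "{0..k}-{j} = {..<j} \<union> {Suc j..k}" using assms by auto
  moreover have "{..<j} \<inter> {Suc j..k} = {}" by auto
  ultimately show ?thesis by (simp add: prod.union_disjoint)
qed

lemma D_pos:
  assumes q: "q \<noteq> 0" and j: "1 \<le> j"
  shows "(1 + q ^ j) * q ^ (j * j + (d * j + T d)) * (\<Prod>l\<in>{0..j+d}-{j}. bq q j - bq q l)
     = (-1) ^ d * qpoch q q d * qpoch q q (2 * j + d)"
proof -
  have "(1 + q ^ j) * q ^ (j * j + (d * j + T d)) * (\<Prod>l\<in>{0..j+d}-{j}. bq q j - bq q l)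
     = (1 + q ^ j) * (q ^ (j * j) * (\<Prod>l<j. bq q j - bq q l))
       * (q ^ (d * j + T d) * (\<Prod>m\<in>{Suc j..j + d}. bq q j - bq q m))"
    unfolding D_split[of j "j+d", OF le_add1] by (simp add: power_add algebra_simps)
  also have "\<dots> = (-1) ^ d * qpoch q q d * ((1 + q ^ j) * qpoch q q j * (\<Prod>l<j. 1 - q ^ (j + l))
       * (\<Prod>i<d. 1 - q ^ (2 * j + i + 1)))"
    unfolding L_formula[OF q] U_formula[OF q] by (simp add: algebra_simps)
  also have "\<dots> = (-1) ^ d * qpoch q q d * qpoch q q (2 * j + d)"
    unfolding combine[OF j] ..
  finally show ?thesis .
qed

lemma D_zero:
  assumes q: "q \<noteq> 0"
  shows "q ^ T d * (\<Prod>l\<in>{0..d}-{0}. bq q 0 - bq q l) = (-1) ^ d * qpoch q q d * qpoch q q d"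
proof -
  have "{0..d}-{0} = {Suc 0..0 + d}" by auto
  moreover have "(\<Prod>i<d. 1 - q ^ (2 * 0 + i + 1)) = qpoch q q d" by (simp add: qpoch_qq)
  ultimately show ?thesis using U_formula[OF q, of d 0] by simp
qed

lemma R_pos: "Rkj (j + d) (int j) q = - ((-1) ^ d * q ^ (T j + T (j + d)) / (qpoch q q d * qpoch q q (2 * j + d)))"
proof -
  have a: "nat (int (j + d) - int j) = d" "nat (int (j + d) + int j) = 2 * j + d" by auto
  have b: "(-1::complex) powi (int (j + d) + int j) = (-1) ^ d"
  proof -
    have "int (j + d) + int j = int (2 * j + d)" by simp
    then have "(-1::complex) powi (int (j + d) + int j) = (-1) ^ (2 * j + d)"
      by (simp only: power_int_of_nat)
    also have "\<dots> = (-1) ^ d" by (simp add: power_add power_mult)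
    finally show ?thesis .
  qed
  have c: "q powi (tri (int j) + tri (int (j + d))) = q ^ (T j + T (j + d))"
    unfolding tri_nat by (metis of_nat_add power_int_of_nat)
  show ?thesis unfolding Rkj_def a b c ..
qed

lemma R_neg: "Rkj (j + d) (- int j) q = - ((-1) ^ d * q ^ (T j + T (j + d) - j) / (qpoch q q d * qpoch q q (2 * j + d)))"
proof -
  have a: "nat (int (j + d) - - int j) = 2 * j + d" "nat (int (j + d) + - int j) = d" by auto
  have b: "(-1::complex) powi (int (j + d) + - int j) = (-1) ^ d"
  proof -
    have "int (j + d) + - int j = int d" by simp
    then show ?thesis by simp
  qed
  have c: "q powi (tri (- int j) + tri (int (j + d))) = q ^ (T j + T (j + d) - j)"
  proof -
    have "tri (- int j) + tri (int (j + d)) = int (T j + T (j + d) - j)"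
      unfolding tri_neg tri_nat using T_ge[of j] by simp
    then show ?thesis by simp
  qed
  show ?thesis unfolding Rkj_def a b c by (simp add: mult.commute)
qed

lemma coeff_pos:
  assumes q: "q \<noteq> 0" and j: "1 \<le> j" and nz: "qpoch q q d \<noteq> 0" "qpoch q q (2 * j + d) \<noteq> 0"
    "1 + q ^ j \<noteq> 0"
  shows "Rkj (j + d) (int j) q + Rkj (j + d) (- int j) q = - 1 / (\<Prod>l\<in>{0..j+d}-{j}. bq q j - bq q l)"
proof -
  define E where "E = j * j + (d * j + T d)"
  define D where "D = (\<Prod>l\<in>{0..j+d}-{j}. bq q j - bq q l)"
  define s :: complex where "s = (-1) ^ d"
  have ss: "s * s = 1" unfolding s_def by (simp add: power_mult_distrib[symmetric])
  have TT: "T j + T (j + d) = E + j"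
  proof -
    have "2 * T j = j * (j + 1)" by (rule T_twice)
    then show ?thesis unfolding E_def T_add by (simp add: algebra_simps)
  qed
  have Deq: "(1 + q ^ j) * q ^ E * D = s * qpoch q q d * qpoch q q (2 * j + d)"
    unfolding E_def D_def s_def using D_pos[OF q j] .
  have Dnz: "D \<noteq> 0" using Deq nz ss by auto
  have "Rkj (j + d) (int j) q + Rkj (j + d) (- int j) q
     = - (s * (q ^ E * (1 + q ^ j)) / (qpoch q q d * qpoch q q (2 * j + d)))"
    unfolding R_pos R_neg TT s_def by (simp add: power_add field_simps add_divide_distrib)
  also have "\<dots> = - (s * (s * qpoch q q d * qpoch q q (2 * j + d) / D) / (qpoch q q d * qpoch q q (2 * j + d)))"
  proof -
    have "q ^ E * (1 + q ^ j) = s * qpoch q q d * qpoch q q (2 * j + d) / D"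
      using Deq Dnz by (simp add: field_simps)
    then show ?thesis by simp
  qed
  also have "\<dots> = - (s * s) / D" using nz by (simp add: field_simps)
  also have "\<dots> = -1 / D" using ss by simp
  finally show ?thesis unfolding D_def .
qed

lemma coeff_zero:
  assumes q: "q \<noteq> 0" and nz: "qpoch q q d \<noteq> 0"
  shows "Rkj d 0 q = - 1 / (\<Prod>l\<in>{0..d}-{0}. bq q 0 - bq q l)"
proof -
  define D where "D = (\<Prod>l\<in>{0..d}-{0}. bq q 0 - bq q l)"
  define s :: complex where "s = (-1) ^ d"
  have ss: "s * s = 1" unfolding s_def by (simp add: power_mult_distrib[symmetric])
  have Deq: "q ^ T d * D = s * qpoch q q d * qpoch q q d"
    unfolding D_def s_def using D_zero[OF q] .
  have Dnz: "D \<noteq> 0" using Deq nz ss by auto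
  have R: "Rkj d 0 q = - (s * q ^ T d / (qpoch q q d * qpoch q q d))"
    using R_pos[of 0 d q] unfolding s_def by simp
  have "q ^ T d = s * qpoch q q d * qpoch q q d / D" using Deq Dnz by (simp add: field_simps)
  then have "Rkj d 0 q = - (s * s) / D" unfolding R using nz by (simp add: field_simps)
  then show ?thesis using ss unfolding D_def by simp
qed

lemma qpoch_nz_factor:
  assumes "qpoch q q n \<noteq> 0" "1 \<le> i" "i \<le> n"
  shows "q ^ i \<noteq> 1"
proof
  assume h: "q ^ i = 1"
  have "i - 1 \<in> {..<n}" "1 - q ^ Suc (i - 1) = 0" using assms(2,3) h by auto
  then have "(\<Prod>i<n. 1 - q ^ Suc i) = 0" by (meson finite_lessThan prod_zero_iff)
  then show False using assms(1) by (simp add: qpoch_qq)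
qed

lemma qpoch_nz_mono:
  assumes "qpoch q q n \<noteq> 0" "m \<le> n"
  shows "qpoch q q m \<noteq> 0"
proof -
  have "qpoch q q n = qpoch q q m * (\<Prod>i<n - m. 1 - q ^ Suc (m + i))"
    unfolding qpoch_qq using prod_split_nat[of "\<lambda>i. 1 - q ^ Suc i" m "n - m"] assms(2) by simp
  then show ?thesis using assms(1) by auto
qed

lemma bq_inj:
  assumes q: "q \<noteq> 0" and nz: "qpoch q q (2 * k) \<noteq> 0"
  shows "inj_on (bq q) {0..k}"
proof (rule inj_onI)
  fix i l assume i: "i \<in> {0..k}" and l: "l \<in> {0..k}" and eq: "bq q i = bq q l"
  show "i = l"
  proof (rule ccontr)
    assume ne: "i \<noteq> l"
    have "(q ^ l - q ^ i) * (1 - q ^ (l + i)) = 0" using key[OF q, of l i] eq by simp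
    then consider "q ^ l = q ^ i" | "q ^ (l + i) = 1" by auto
    then show False
    proof cases
      case 1
      show False
      proof (cases "l < i")
        case True
        then have "q ^ i = q ^ l * q ^ (i - l)" by (simp add: power_add[symmetric])
        then have "q ^ (i - l) = 1" using 1 q by simp
        moreover have "q ^ (i - l) \<noteq> 1" using qpoch_nz_factor[OF nz] True i by auto
        ultimately show False by simp
      next
        case False
        then have lt: "i < l" using ne by simp
        then have "q ^ l = q ^ i * q ^ (l - i)" by (simp add: power_add[symmetric])
        then have "q ^ (l - i) = 1" using 1 q by simp
        moreover have "q ^ (l - i) \<noteq> 1" using qpoch_nz_factor[OF nz] lt l by auto
        ultimately show False by simp
      qed
    next
      case 2
      moreover have "q ^ (l + i) \<noteq> 1" using qpoch_nz_factor[OF nz] ne i l by auto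
      ultimately show False by simp
    qed
  qed
qed

lemma step_factor:
  fixes x z :: complex
  assumes "x \<noteq> 0" "z \<noteq> 0"
  shows "(1 - x * z) * (1 - z / x) = - z * (x + inverse x - (z + inverse z))"
  using assms by (simp add: field_simps)

lemma stepA:
  assumes x: "x \<noteq> 0" and q: "q \<noteq> 0"
  shows "qpoch x q (Suc k) * qpoch (q / x) q k
     = (1 - x) * (-1) ^ k * q ^ T k * (\<Prod>i\<in>{1..k}. x + inverse x - bq q i)"
proof (induction k)
  case 0
  then show ?case by (simp add: qpoch_def)
next
  case (Suc k)
  have f: "(1 - x * q ^ Suc k) * (1 - q / x * q ^ k) = - (q ^ Suc k) * (x + inverse x - bq q (Suc k))"
  proof -
    have "q / x * q ^ k = q ^ Suc k / x" by simp
    then show ?thesis unfolding bq_def using step_factor[OF x, of "q ^ Suc k"] q by simp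
  qed
  have set: "{1..Suc k} = insert (Suc k) {1..k}" by auto
  have "qpoch x q (Suc (Suc k)) * qpoch (q / x) q (Suc k)
     = (qpoch x q (Suc k) * qpoch (q / x) q k) * ((1 - x * q ^ Suc k) * (1 - q / x * q ^ k))"
    by (simp add: qpoch_Suc algebra_simps)
  also have "\<dots> = (1 - x) * (-1) ^ k * q ^ T k * (\<Prod>i\<in>{1..k}. x + inverse x - bq q i)
     * (- (q ^ Suc k) * (x + inverse x - bq q (Suc k)))"
    unfolding Suc.IH f ..
  also have "\<dots> = (1 - x) * (-1) ^ Suc k * q ^ T (Suc k) * (\<Prod>i\<in>{1..Suc k}. x + inverse x - bq q i)"
    unfolding set by (simp add: power_add algebra_simps)
  finally show ?case .
qed

lemma sum_sym:
  "(\<Sum>j = - int k..int k. f j) = f 0 + (\<Sum>j\<in>{1..k}. f (int j) + f (- int j))"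
proof (induction k)
  case 0
  then show ?case by simp
next
  case (Suc k)
  have set: "{- int (Suc k)..int (Suc k)} = insert (int (Suc k)) (insert (- int (Suc k)) {- int k..int k})"
    by auto
  have set2: "{1..Suc k} = insert (Suc k) {1..k}" by auto
  show ?case unfolding set set2 using Suc.IH by (simp add: algebra_simps)
qed

lemma final_alg:
  fixes x Q :: complex
  assumes "x \<noteq> 0" "x \<noteq> 1" "Q \<noteq> 0"
  shows "1 / ((1 - x) * Q) = - (1 - inverse x) * (1 / ((x + inverse x - 2) * Q))"
proof -
  have h1: "x + inverse x - 2 = (x - 1) * (x - 1) / x" using assms by (simp add: field_simps)
  have h2: "1 - inverse x = (x - 1) / x" using assms by (simp add: field_simps)
  have h3: "1 - x = - (x - 1)" by simp
  have u: "x - 1 \<noteq> 0" using assms by auto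
  have g: "1 / (- u * Q) = - (u / x) * (1 / ((u * u / x) * Q))" if "u \<noteq> 0" for u
    using that assms by (simp add: field_simps)
  show ?thesis unfolding h1 h2 h3 by (rule g[OF u])
qed

theorem lemma5p3:
  fixes k :: nat and x q :: complex
  assumes "x \<noteq> 0" and "q \<noteq> 0"
    and "qpoch x q (k + 1) \<noteq> 0"
    and "qpoch (q / x) q k \<noteq> 0"
    and "qpoch q q (2 * k) \<noteq> 0"
    and "\<forall>j\<in>{-int k..int k}. x + inverse x - q powi j - q powi (-j) \<noteq> 0"
  shows "sigma_tilde k x q =
    (1 - inverse x) * (\<Sum>j = -int k..int k. Rkj k j q / (x + inverse x - q powi j - q powi (-j)))"
proof -
  note xne = assms(1) and qne = assms(2) and nz = assms(5)
  define y where "y = x + inverse x"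
  define D where "D j = (\<Prod>l\<in>{0..k}-{j}. bq q j - bq q l)" for j
  have den: "x + inverse x - q powi int j - q powi (- int j) = y - bq q j" for j :: nat
    unfolding y_def bq_def by (simp add: power_int_minus)
  have yb: "y - bq q j \<noteq> 0" if "j \<le> k" for j
  proof -
    have "int j \<in> {-int k..int k}" using that by auto
    then have "x + inverse x - q powi int j - q powi (- int j) \<noteq> 0" using assms(6) by blast
    then show ?thesis unfolding den .
  qed
  have x1: "x \<noteq> 1"
  proof
    assume "x = 1"
    then have "qpoch x q (Suc k) = 0" unfolding qpoch_def prod.lessThan_Suc_shift by simp
    then show False using assms(3) by simp
  qed
  have PF: "1 / (\<Prod>j\<in>{0..k}. y - bq q j) = (\<Sum>j\<in>{0..k}. 1 / ((y - bq q j) * D j))"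
  proof -
    have "y \<notin> bq q ` {0..k}"
    proof
      assume "y \<in> bq q ` {0..k}"
      then obtain i where "i \<in> {0..k}" "y = bq q i" by blast
      then show False using yb[of i] by simp
    qed
    then show ?thesis unfolding D_def by (intro pf bq_inj[OF qne nz]) auto
  qed
  have set0: "{0..k} = insert 0 {1..k}" by auto
  have b0: "bq q 0 = 2" unfolding bq_def by simp
  have prod01: "(\<Prod>j\<in>{0..k}. y - bq q j) = (y - 2) * (\<Prod>j\<in>{1..k}. y - bq q j)"
    unfolding set0 by (simp add: b0)
  have Qnz: "(\<Prod>j\<in>{1..k}. y - bq q j) \<noteq> 0" using yb by auto
  have LHS: "sigma_tilde k x q = - (1 - inverse x) * (1 / (\<Prod>j\<in>{0..k}. y - bq q j))"
  proof -
    have sgn: "((-1::complex) ^ k) \<noteq> 0" by simp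
    have "sigma_tilde k x q = (-1) ^ k * q ^ T k /
        ((1 - x) * (-1) ^ k * q ^ T k * (\<Prod>i\<in>{1..k}. y - bq q i))"
      unfolding sigma_tilde_def tri_nat power_int_of_nat Suc_eq_plus1[symmetric] stepA[OF xne qne] y_def ..
    also have "\<dots> = 1 / ((1 - x) * (\<Prod>i\<in>{1..k}. y - bq q i))"
    proof -
      have c: "(-1::complex) ^ k * q ^ T k \<noteq> 0" using sgn qne by simp
      have "(1 - x) * (-1) ^ k * q ^ T k * (\<Prod>i\<in>{1..k}. y - bq q i)
          = ((-1) ^ k * q ^ T k) * ((1 - x) * (\<Prod>i\<in>{1..k}. y - bq q i))" by (simp add: ac_simps)
      then show ?thesis using nonzero_divide_mult_cancel_left[OF c] by simp
    qed
    also have "\<dots> = - (1 - inverse x) * (1 / ((x + inverse x - 2) * (\<Prod>i\<in>{1..k}. y - bq q i)))"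
      by (rule final_alg[OF xne x1 Qnz])
    finally show ?thesis unfolding prod01 by (simp only: y_def)
  qed
  have coef: "Rkj k (int j) q + Rkj k (- int j) q = - 1 / D j" if j: "j \<in> {1..k}" for j
  proof -
    obtain d where kd: "k = j + d" using j le_Suc_ex by auto
    have j1: "1 \<le> j" using j by auto
    have n1: "qpoch q q d \<noteq> 0" using qpoch_nz_mono[OF nz] kd by auto
    have n2: "qpoch q q (2 * j + d) \<noteq> 0" using qpoch_nz_mono[OF nz] kd by auto
    have n3: "1 + q ^ j \<noteq> 0"
    proof
      assume "1 + q ^ j = 0"
      then have "q ^ j = -1" by (simp add: add_eq_0_iff)
      moreover have "q ^ (2 * j) = (q ^ j) ^ 2" by (simp add: power_mult[symmetric] mult.commute)
      ultimately have "q ^ (2 * j) = 1" by simp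
      moreover have "q ^ (2 * j) \<noteq> 1" using qpoch_nz_factor[OF nz] j by auto
      ultimately show False by simp
    qed
    show ?thesis unfolding D_def kd using coeff_pos[OF qne j1 n1 n2 n3] .
  qed
  have coef0: "Rkj k 0 q = - 1 / D 0"
    unfolding D_def using coeff_zero[OF qne qpoch_nz_mono[OF nz]] by simp
  define f where "f j = Rkj k j q / (x + inverse x - q powi j - q powi (-j))" for j
  have fpos: "f (int j) = Rkj k (int j) q / (y - bq q j)" for j :: nat
    unfolding f_def den ..
  have fneg: "f (- int j) = Rkj k (- int j) q / (y - bq q j)" for j :: nat
  proof -
    have "x + inverse x - q powi (- int j) - q powi (- (- int j)) = y - bq q j"
      unfolding minus_minus den[symmetric] by (simp only: diff_right_commute)
    then show ?thesis unfolding f_def by (simp only:)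
  qed
  have "(\<Sum>j = -int k..int k. f j) = f (int 0) + (\<Sum>j\<in>{1..k}. f (int j) + f (- int j))"
    using sum_sym[of f k] by simp
  also have "\<dots> = Rkj k 0 q / (y - bq q 0) + (\<Sum>j\<in>{1..k}. (Rkj k (int j) q + Rkj k (- int j) q) / (y - bq q j))"
    unfolding fpos fneg add_divide_distrib by simp
  also have "\<dots> = - 1 / D 0 / (y - bq q 0) + (\<Sum>j\<in>{1..k}. - 1 / D j / (y - bq q j))"
    using coef coef0 by (intro arg_cong2[where f="(+)"] sum.cong) simp_all
  also have "\<dots> = - (\<Sum>j\<in>{0..k}. 1 / ((y - bq q j) * D j))"
  proof -
    have "(\<Sum>j\<in>{0..k}. 1 / ((y - bq q j) * D j)) = 1 / ((y - bq q 0) * D 0) + (\<Sum>j\<in>{1..k}. 1 / ((y - bq q j) * D j))"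
      unfolding set0 by (subst sum.insert) auto
    moreover have "- 1 / D j / (y - bq q j) = - (1 / ((y - bq q j) * D j))" for j
      by (simp add: divide_divide_eq_left mult.commute)
    ultimately show ?thesis by (simp add: sum_negf mult.commute)
  qed
  finally have "(\<Sum>j = -int k..int k. f j) = - (\<Sum>j\<in>{0..k}. 1 / ((y - bq q j) * D j))" .
  then show ?thesis unfolding LHS PF f_def by (simp add: algebra_simps)
qed
end
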